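(* Let $\mathcal{A}$ and $\mathcal{B}$ be configurations of $d$ doors such that $\mathcal{A}$ dominates $\mathcal{B}$. Then for every knock sequence $\pi$, $\mathbb{T}_{\mathcal{A}}(\pi)\le\mathbb{T}_{\mathcal{B}}(\pi)$.
   Context: Dependent doors model. Fix an integer $d\ge 2$ and doors $1,\dots,d$, all initially closed; once a door opens it stays open forever. A configuration $\mathcal{C}$ specifies for each door $i$ a function $\phi_i^{\mathcal{C}}$ mapping every finite nonempty sequence $(X_1,\dots,X_n)$ of subsets of $\{1,\dots,i-1\}$ to $[0,1]$: $\phi_i^{\mathcal{C}}(X_1,\dots,X_n)$ is the probability that door $i$ has opened during $n$ knocks on it, where $X_j$ is the set of open doors among $\{1,\dots,i-1\}$ at the time of the $j$-th knock on door $i$ (so a closed door $i$ opens at its $n$-th knock with conditional probability $(\phi_i(X_1..X_n)-\phi_i(X_1..X_{n-1}))/(1-\phi_i(X_1..X_{n-1}))$, with $\phi_i$ of the empty sequence equal to $0$). Configurations are assumed monotone ($\phi_i(X')\le\phi_i(X)$ whenever $X'$ is a, not necessarily consecutive, subsequence of $X$) and positively correlated ($\phi_i(X'_1,\dots,X'_n)\le\phi_i(X_1,\dots,X_n)$ whenever $X'_j\subseteq X_j$ for all $j$). Configuration $\mathcal{A}$ dominates configuration $\mathcal{B}$ if $\phi_i^{\mathcal{A}}(X)\ge\phi_i^{\mathcal{B}}(X)$ for every door $i$ and every finite nonempty sequence $X$ of subsets of $\{1,\dots,i-1\}$. A knock sequence $\pi$ is an infinite sequence of door indices, executed in order without any feedback;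 $\mathbb{T}_{\mathcal{C}}(\pi)$ is the expected number of knocks until all $d$ doors are open. *)

theory Defs
  imports "HOL-Probability.Probability" "HOL-Library.Sublist"
begin

text \<open>Doors are numbered 1..d.  A configuration is a function
  phi :: nat => nat set list => real, where phi i X is the probability that
  door i has opened during length X knocks, X being the list of sets of open
  doors among 1..i-1 at the times of these knocks.  Only arguments that are
  nonempty lists of subsets of {1..<i} are meaningful.\<close>

type_synonym config = "nat \<Rightarrow> nat set list \<Rightarrow> real"

definition valid_seq :: "nat \<Rightarrow> nat set list \<Rightarrow> bool" where
  "valid_seq i X \<longleftrightarrow> X \<noteq> [] \<and> (\<forall>S\<in>set X. S \<subseteq> {1..<i})"

definition is_configuration :: "nat \<Rightarrow> config \<Rightarrow> bool" where
  "is_configuration d \<phi> \<longleftrightarrow>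
     (\<forall>i\<in>{1..d}. \<forall>X. valid_seq i X \<longrightarrow> 0 \<le> \<phi> i X \<and> \<phi> i X \<le> 1)"

definition monotone_config :: "nat \<Rightarrow> config \<Rightarrow> bool" where
  "monotone_config d \<phi> \<longleftrightarrow>
     (\<forall>i\<in>{1..d}. \<forall>X X'. valid_seq i X \<longrightarrow> valid_seq i X' \<longrightarrow> subseq X' X
        \<longrightarrow> \<phi> i X' \<le> \<phi> i X)"

definition pos_correlated :: "nat \<Rightarrow> config \<Rightarrow> bool" where
  "pos_correlated d \<phi> \<longleftrightarrow>
     (\<forall>i\<in>{1..d}. \<forall>X X'. valid_seq i X \<longrightarrow> valid_seq i X' \<longrightarrow> list_all2 (\<subseteq>) X' X
        \<longrightarrow> \<phi> i X' \<le> \<phi> i X)"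

definition dominates :: "nat \<Rightarrow> config \<Rightarrow> config \<Rightarrow> bool" where
  "dominates d \<A> \<B> \<longleftrightarrow> (\<forall>i\<in>{1..d}. \<forall>X. valid_seq i X \<longrightarrow> \<B> i X \<le> \<A> i X)"

definition phi0 :: "config \<Rightarrow> nat \<Rightarrow> nat set list \<Rightarrow> real" where
  "phi0 \<phi> i X = (if X = [] then 0 else \<phi> i X)"

text \<open>Given the history hs = [S_0, ..., S_k] of sets of open doors before knocks
  0..k (S_0 = {}), the sequence X_1..X_n of sets of open doors among 1..i-1
  at the times of the knocks on door i = pi k so far (including knock k).\<close>
definition knock_hist :: "(nat \<Rightarrow> nat) \<Rightarrow> nat \<Rightarrow> nat set list \<Rightarrow> nat set list" where
  "knock_hist \<pi> k hs = [hs ! m \<inter> {1..<\<pi> k}. m \<leftarrow> [0..<Suc k], \<pi> m = \<pi> k]"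

text \<open>Conditional probability that a closed door pi k opens at knock k.\<close>
definition open_prob :: "config \<Rightarrow> (nat \<Rightarrow> nat) \<Rightarrow> nat \<Rightarrow> nat set list \<Rightarrow> real" where
  "open_prob \<phi> \<pi> k hs =
     (let i = \<pi> k; X = knock_hist \<pi> k hs
      in (phi0 \<phi> i X - phi0 \<phi> i (butlast X)) / (1 - phi0 \<phi> i (butlast X)))"

text \<open>Distribution of the history [S_0, ..., S_t] of sets of open doors after
  0, 1, ..., t knocks of the (feedback-free) knock sequence pi.\<close>
fun traj :: "config \<Rightarrow> (nat \<Rightarrow> nat) \<Rightarrow> nat \<Rightarrow> nat set list pmf" where
  "traj \<phi> \<pi> 0 = return_pmf [{}]"
| "traj \<phi> \<pi> (Suc k) = traj \<phi> \<pi> k \<bind> (\<lambda>hs.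
     if \<pi> k \<in> last hs then return_pmf (hs @ [last hs])
     else map_pmf (\<lambda>b. hs @ [if b then insert (\<pi> k) (last hs) else last hs])
            (bernoulli_pmf (open_prob \<phi> \<pi> k hs)))"

text \<open>Expected number of knocks until all d doors are open:
  sum over t >= 0 of the probability that not all doors are open after t knocks
  (possibly infinite).\<close>
definition expected_time :: "nat \<Rightarrow> config \<Rightarrow> (nat \<Rightarrow> nat) \<Rightarrow> ennreal" where
  "expected_time d \<phi> \<pi> =
     (\<Sum>t. ennreal (measure_pmf.prob (traj \<phi> \<pi> t) {hs. \<not> {1..d} \<subseteq> last hs}))"

end

theory Submission imports Defs begin

definition Unif :: "real measure" where "Unif = uniform_measure lborel {0..1}"

lemma Unif_prob: "prob_space Unif"
  unfolding Unif_def by (rule prob_space_uniform_measure) auto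

lemma sets_Unif[simp]: "sets Unif = sets borel"
  unfolding Unif_def by simp

lemma measure_Unif: "X \<in> sets borel \<Longrightarrow> measure Unif X = measure lborel ({0..1} \<inter> X)"
  unfolding Unif_def by (subst measure_uniform_measure) auto

definition khist :: "(nat \<Rightarrow> nat) \<Rightarrow> nat \<Rightarrow> nat \<Rightarrow> nat set list \<Rightarrow> nat set list" where
  "khist \<pi> i t y = [y ! m \<inter> {1..<i}. m \<leftarrow> [0..<t], \<pi> m = i]"

lemma knock_hist_khist: "knock_hist \<pi> t y = khist \<pi> (\<pi> t) (Suc t) y"
  unfolding knock_hist_def khist_def by simp

lemma khist_Suc: "khist \<pi> i (Suc t) y = khist \<pi> i t y @ (if \<pi> t = i then [y ! t \<inter> {1..<i}] else [])"
  unfolding khist_def by simp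

lemma khist_append: "t \<le> length y \<Longrightarrow> khist \<pi> i t (y @ z) = khist \<pi> i t y"
  unfolding khist_def by (auto simp: nth_append intro!: arg_cong[where f=concat] map_cong)

definition Hstep :: "config \<Rightarrow> (nat \<Rightarrow> nat) \<Rightarrow> nat \<Rightarrow> (nat \<Rightarrow> real) \<Rightarrow> nat set list \<Rightarrow> nat set" where
  "Hstep \<phi> \<pi> t u hs = (if \<pi> t \<in> last hs then last hs
      else if u (\<pi> t) < \<phi> (\<pi> t) (knock_hist \<pi> t hs) then insert (\<pi> t) (last hs) else last hs)"

fun H :: "config \<Rightarrow> (nat \<Rightarrow> nat) \<Rightarrow> (nat \<Rightarrow> real) \<Rightarrow> nat \<Rightarrow> nat set list" where
  "H \<phi> \<pi> u 0 = [{}]"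
| "H \<phi> \<pi> u (Suc t) = H \<phi> \<pi> u t @ [Hstep \<phi> \<pi> t u (H \<phi> \<pi> u t)]"

lemma length_H[simp]: "length (H \<phi> \<pi> u t) = Suc t"
  by (induction t) auto

definition tstep :: "config \<Rightarrow> (nat \<Rightarrow> nat) \<Rightarrow> nat \<Rightarrow> nat set list \<Rightarrow> nat set list pmf" where
  "tstep \<phi> \<pi> k hs = (if \<pi> k \<in> last hs then return_pmf (hs @ [last hs])
     else map_pmf (\<lambda>b. hs @ [if b then insert (\<pi> k) (last hs) else last hs])
            (bernoulli_pmf (open_prob \<phi> \<pi> k hs)))"

lemma traj_Suc': "traj \<phi> \<pi> (Suc k) = traj \<phi> \<pi> k \<bind> tstep \<phi> \<pi> k"
  unfolding tstep_def by simp

lemma set_tstep: "set_pmf (tstep \<phi> \<pi> k hs) \<subseteq> {hs @ [s] | s. True}"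
  unfolding tstep_def by auto

locale doors =
  fixes d :: nat and \<pi> :: "nat \<Rightarrow> nat"
  assumes pi_in: "\<And>t. \<pi> t \<in> {1..d}"
begin

sublocale P: finite_product_prob_space "\<lambda>_::nat. Unif" "{1..d}"
proof -
  interpret product_prob_space "\<lambda>_::nat. Unif" "{1..d}"
    by (rule product_prob_spaceI) (rule Unif_prob)
  show "finite_product_prob_space (\<lambda>_::nat. Unif) {1..d}"
    by unfold_locales auto
qed

abbreviation "I \<equiv> {1..d}"

definition Pm where "Pm = PiM I (\<lambda>_::nat. Unif)"

lemma space_Pm: "space Pm = PiE I (\<lambda>_. UNIV)"
  unfolding Pm_def Unif_def by (simp add: space_PiM)

lemma prob_Pm: "prob_space Pm"
  unfolding Pm_def by (rule P.prob_space_axioms)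

definition E :: "config \<Rightarrow> nat \<Rightarrow> nat set list \<Rightarrow> (nat \<Rightarrow> real) set" where
  "E \<phi> t y = {u \<in> space Pm. H \<phi> \<pi> u t = y}"

lemma E_0: "E \<phi> 0 y = (if y = [{}] then space Pm else {})"
  unfolding E_def by auto

lemma E_Suc: "E \<phi> (Suc t) (y @ [S]) = {u \<in> E \<phi> t y. Hstep \<phi> \<pi> t u y = S}"
  unfolding E_def by auto

lemma E_Nil: "E \<phi> (Suc t) [] = {}"
  unfolding E_def by auto

lemma E_length: "E \<phi> t y \<noteq> {} \<Longrightarrow> length y = Suc t"
  unfolding E_def by auto

lemma PiE_restrict_coord:
  "j \<in> J \<Longrightarrow> {u \<in> PiE J A. u j \<in> X} = PiE J (A(j := A j \<inter> X))"
  by (auto simp: PiE_iff extensional_def split: if_splits)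

lemma valid_knock_hist: "valid_seq (\<pi> t) (knock_hist \<pi> t y)"
  unfolding valid_seq_def knock_hist_def by auto

lemma valid_khist: "khist \<pi> i t y \<noteq> [] \<Longrightarrow> valid_seq i (khist \<pi> i t y)"
  unfolding valid_seq_def khist_def by auto

context
  fixes \<phi> :: config
  assumes cfg: "is_configuration d \<phi>" and mono: "monotone_config d \<phi>"
begin

lemma c_bounds: "0 \<le> \<phi> (\<pi> t) (knock_hist \<pi> t y) \<and> \<phi> (\<pi> t) (knock_hist \<pi> t y) \<le> 1"
  using cfg pi_in[of t] valid_knock_hist[of t y] unfolding is_configuration_def by blast

lemma b_bounds: "i \<in> I \<Longrightarrow> 0 \<le> phi0 \<phi> i (khist \<pi> i t y) \<and> phi0 \<phi> i (khist \<pi> i t y) \<le> 1"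
  using cfg valid_khist[of i t y] unfolding is_configuration_def phi0_def by auto

lemma b_le_c: "phi0 \<phi> (\<pi> t) (khist \<pi> (\<pi> t) t y) \<le> \<phi> (\<pi> t) (knock_hist \<pi> t y)"
proof (cases "khist \<pi> (\<pi> t) t y = []")
  case True
  then show ?thesis using c_bounds[of t y] by (simp add: phi0_def)
next
  case False
  have "subseq (khist \<pi> (\<pi> t) t y) (knock_hist \<pi> t y)"
    by (simp add: knock_hist_khist khist_Suc subseq_rev_drop_many)
  then show ?thesis using False mono pi_in[of t] valid_khist[OF False] valid_knock_hist[of t y]
    unfolding monotone_config_def phi0_def by auto
qed

lemma box:
  "E \<phi> t y = {} \<or> (\<exists>A. E \<phi> t y = PiE I A \<and> (\<forall>i\<in>I. A i \<in> sets borel) \<and>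
     (\<forall>i\<in>I. i \<notin> last y \<longrightarrow> A i \<inter> {0..1} = {phi0 \<phi> i (khist \<pi> i t y)..1}))"
proof (induction t arbitrary: y)
  case 0
  show ?case
  proof (cases "y = [{}]")
    case True
    then show ?thesis
      by (intro disjI2 exI[of _ "\<lambda>_. UNIV"]) (auto simp: E_0 space_Pm khist_def phi0_def)
  qed (simp add: E_0)
next
  case (Suc t)
  show ?case
  proof (cases y rule: rev_exhaust)
    case Nil
    then show ?thesis by (simp add: E_Nil)
  next
    case (snoc y0 S)
    show ?thesis
    proof (cases "E \<phi> t y0 = {}")
      case True
      then show ?thesis by (simp add: snoc E_Suc)
    next
      case False
      with Suc.IH[of y0] obtain A where A: "E \<phi> t y0 = PiE I A" "\<forall>i\<in>I. A i \<in> sets borel"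
        "\<forall>i\<in>I. i \<notin> last y0 \<longrightarrow> A i \<inter> {0..1} = {phi0 \<phi> i (khist \<pi> i t y0)..1}"
        by blast
      have len: "length y0 = Suc t" using E_length[OF False] .
      have kh: "khist \<pi> i (Suc t) (y0 @ [S]) = khist \<pi> i t y0 @ (if \<pi> t = i then [y0 ! t \<inter> {1..<i}] else [])" for i
        using len by (simp add: khist_append khist_Suc nth_append)
      define j where "j = \<pi> t"
      have jI: "j \<in> I" using pi_in j_def by blast
      have kh2: "\<And>i. i \<noteq> j \<Longrightarrow> khist \<pi> i (Suc t) y = khist \<pi> i t y0"
        using kh by (simp add: snoc j_def)
      have lasty: "last y = S" by (simp add: snoc)
      have Ey: "E \<phi> (Suc t) y = {u \<in> E \<phi> t y0. Hstep \<phi> \<pi> t u y0 = S}"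
        by (simp add: snoc E_Suc)
      show ?thesis
      proof (cases "j \<in> last y0")
        case True
        then have hs: "Hstep \<phi> \<pi> t u y0 = last y0" for u by (simp add: Hstep_def j_def)
        show ?thesis
        proof (cases "S = last y0")
          case True
          show ?thesis
            apply (intro disjI2 exI[of _ A])
            using A \<open>j \<in> last y0\<close> True kh2 by (auto simp: Ey lasty hs) metis+
        qed (simp add: snoc E_Suc hs)
      next
        case False
        define c where "c = \<phi> j (knock_hist \<pi> t y0)"
        have hs: "Hstep \<phi> \<pi> t u y0 = (if u j < c then insert j (last y0) else last y0)" for u
          using False by (simp add: Hstep_def j_def c_def)
        have bc: "phi0 \<phi> j (khist \<pi> j t y0) \<le> c" using b_le_c[of t y0] by (simp add: j_def c_def)
        have c1: "c \<le> 1" using c_bounds[of t y0] by (simp add: j_def c_def)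
        have khj: "khist \<pi> j (Suc t) (y0 @ [S]) = knock_hist \<pi> t y0"
          using kh[of j] by (simp add: knock_hist_khist khist_Suc j_def)
        show ?thesis
        proof (cases "S = insert j (last y0)")
          case True
          have "E \<phi> (Suc t) y = {u \<in> PiE I A. u j \<in> {..<c}}"
            using False True by (auto simp: snoc E_Suc hs A(1))
          also have "\<dots> = PiE I (A(j := A j \<inter> {..<c}))" by (rule PiE_restrict_coord[OF jI])
          finally show ?thesis
            apply -
            apply (intro disjI2 exI[of _ "A(j := A j \<inter> {..<c})"])
            using A True by (auto simp: lasty kh2)
        next
          case F2: False
          show ?thesis
          proof (cases "S = last y0")
            case True
            have "E \<phi> (Suc t) y = {u \<in> PiE I A. u j \<in> {c..}}"
              using False True by (auto simp: snoc E_Suc hs A(1) not_less)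
            also have "\<dots> = PiE I (A(j := A j \<inter> {c..}))" by (rule PiE_restrict_coord[OF jI])
            finally have eq: "E \<phi> (Suc t) y = PiE I (A(j := A j \<inter> {c..}))" .
            have Aj: "A j \<inter> {c..} \<inter> {0..1} = {phi0 \<phi> j (khist \<pi> j (Suc t) y)..1}"
            proof -
              have "A j \<inter> {c..} \<inter> {0..1} = {phi0 \<phi> j (khist \<pi> j t y0)..1} \<inter> {c..}"
                using A(3) jI False by blast
              also have "\<dots> = {c..1}" using bc by auto
              finally have "A j \<inter> {c..} \<inter> {0..1} = {c..1}" .
              moreover have "c = phi0 \<phi> j (khist \<pi> j (Suc t) y)"
                using khj by (simp add: snoc phi0_def c_def knock_hist_def)
              ultimately show ?thesis by simp
            qed
            show ?thesis
              apply (intro disjI2 exI[of _ "A(j := A j \<inter> {c..})"])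
              using A True Aj eq by (auto simp: lasty kh2)
          next
            case False
            then show ?thesis using F2 by (simp add: snoc E_Suc hs)
          qed
        qed
      qed
    qed
  qed
qed

lemma E_sets: "E \<phi> t y \<in> sets Pm"
  using box[of t y] by (auto simp: Pm_def intro!: sets_PiM_I_finite)

end

lemma meas_PiE: "(\<forall>i\<in>I. A i \<in> sets borel) \<Longrightarrow> measure Pm (PiE I A) = (\<Prod>i\<in>I. measure Unif (A i))"
  unfolding Pm_def by (rule P.prob_times) auto

lemma meas_PiE_upd:
  assumes "\<forall>i\<in>I. A i \<in> sets borel" "B \<in> sets borel" "j \<in> I"
  shows "measure Pm (PiE I (A(j := B))) = measure Unif B * (\<Prod>i\<in>I-{j}. measure Unif (A i))"
proof -
  have "measure Pm (PiE I (A(j := B))) = (\<Prod>i\<in>I. measure Unif ((A(j := B)) i))"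
    using assms by (intro meas_PiE) auto
  also have "\<dots> = measure Unif B * (\<Prod>i\<in>I-{j}. measure Unif ((A(j := B)) i))"
    using assms(3) by (subst prod.remove[of _ j]) auto
  also have "(\<Prod>i\<in>I-{j}. measure Unif ((A(j := B)) i)) = (\<Prod>i\<in>I-{j}. measure Unif (A i))"
    by (rule prod.cong) auto
  finally show ?thesis .
qed

end

lemma integral_single:
  "(\<integral>z. (if z = y then c else 0) \<partial>measure_pmf p) = c * pmf p (y::'a)"
proof -
  have "(\<integral>z. (if z = y then c else 0) \<partial>measure_pmf p) = (\<integral>z. indicator {y} z * c \<partial>measure_pmf p)"
    by (rule Bochner_Integration.integral_cong) (auto simp: indicator_def)
  also have "\<dots> = measure (measure_pmf p) {y} * c" by simp
  finally show ?thesis by (simp add: measure_pmf_single)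
qed

lemma pmf_tstep_0: "y' \<notin> {z @ [s] | s. True} \<Longrightarrow> pmf (tstep \<phi> \<pi> k z) y' = 0"
  using set_tstep[of \<phi> \<pi> k z] by (meson pmf_eq_0_set_pmf subsetD)

context doors
begin

context
  fixes \<phi> :: config
  assumes cfg: "is_configuration d \<phi>" and mono: "monotone_config d \<phi>"
begin

lemma step_meas:
  "measure Pm (E \<phi> (Suc t) (y0 @ [S])) = pmf (tstep \<phi> \<pi> t y0) (y0 @ [S]) * measure Pm (E \<phi> t y0)"
proof (cases "E \<phi> t y0 = {}")
  case True
  then show ?thesis by (simp add: E_Suc)
next
  case False
  with box[OF cfg mono, of t y0] obtain A where A: "E \<phi> t y0 = PiE I A" "\<forall>i\<in>I. A i \<in> sets borel"
    "\<forall>i\<in>I. i \<notin> last y0 \<longrightarrow> A i \<inter> {0..1} = {phi0 \<phi> i (khist \<pi> i t y0)..1}"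
    by blast
  have len: "length y0 = Suc t" using E_length[OF False] .
  define j where "j = \<pi> t"
  have jI: "j \<in> I" using pi_in j_def by blast
  have Ey: "E \<phi> (Suc t) (y0 @ [S]) = {u \<in> E \<phi> t y0. Hstep \<phi> \<pi> t u y0 = S}"
    by (simp add: E_Suc)
  show ?thesis
  proof (cases "j \<in> last y0")
    case True
    then have hs: "Hstep \<phi> \<pi> t u y0 = last y0" for u by (simp add: Hstep_def j_def)
    have ts: "tstep \<phi> \<pi> t y0 = return_pmf (y0 @ [last y0])"
      using True by (simp add: tstep_def j_def)
    show ?thesis by (simp add: Ey hs ts pmf_return indicator_def)
  next
    case False
    define c where "c = \<phi> j (knock_hist \<pi> t y0)"
    define b where "b = phi0 \<phi> j (khist \<pi> j t y0)"
    define R where "R = (\<Prod>i\<in>I-{j}. measure Unif (A i))"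
    have hs: "Hstep \<phi> \<pi> t u y0 = (if u j < c then insert j (last y0) else last y0)" for u
      using False by (simp add: Hstep_def j_def c_def)
    have bc: "b \<le> c" using b_le_c[OF cfg mono, of t y0] by (simp add: j_def c_def b_def)
    have c1: "c \<le> 1" using c_bounds[OF cfg mono, of t y0] by (simp add: j_def c_def)
    have b0: "0 \<le> b" using b_bounds[OF cfg mono, of j t y0] jI by (simp add: b_def)
    define p where "p = open_prob \<phi> \<pi> t y0"
    have p: "p = (c - b) / (1 - b)"
      unfolding p_def open_prob_def Let_def
      by (simp add: c_def b_def j_def phi0_def knock_hist_khist khist_Suc)
    have p01: "0 \<le> p \<and> p \<le> 1"
    proof (cases "b = 1")
      case True then show ?thesis by (simp add: p)
    next
      case False
      then have "b < 1" using bc c1 by linarith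
      then show ?thesis using bc c1 by (simp add: p field_simps)
    qed
    have ts: "tstep \<phi> \<pi> t y0 = map_pmf (\<lambda>b. y0 @ [if b then insert j (last y0) else last y0]) (bernoulli_pmf p)"
      using False unfolding j_def p_def by (simp add: tstep_def)
    have ne: "insert j (last y0) \<noteq> last y0" using False by auto
    have Aj01: "A j \<inter> {0..1} = {b..1}" using A(3) jI False by (simp add: b_def)
    have mE: "measure Pm (E \<phi> t y0) = (1 - b) * R"
    proof -
      have "measure Pm (E \<phi> t y0) = measure Pm (PiE I (A(j := A j)))" by (simp add: A(1))
      also have "\<dots> = measure Unif (A j) * R" unfolding R_def
        using A(2) jI by (intro meas_PiE_upd) auto
      also have "measure Unif (A j) = measure lborel ({0..1} \<inter> A j)"
        using A(2) jI by (simp add: measure_Unif)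
      also have "{0..1} \<inter> A j = {b..1}" using A(3) jI False by (auto simp: b_def)
      finally show ?thesis using bc c1 by simp
    qed
    show ?thesis
    proof (cases "S = insert j (last y0)")
      case True
      have "E \<phi> (Suc t) (y0 @ [S]) = {u \<in> PiE I A. u j \<in> {..<c}}"
        unfolding Ey A(1) using ne True by (auto simp: hs)
      also have "\<dots> = PiE I (A(j := A j \<inter> {..<c}))" by (rule PiE_restrict_coord[OF jI])
      finally have eqE: "E \<phi> (Suc t) (y0 @ [S]) = PiE I (A(j := A j \<inter> {..<c}))" .
      have Bs: "A j \<inter> {..<c} \<in> sets borel" using A(2) jI by auto
      have "measure Pm (E \<phi> (Suc t) (y0 @ [S])) = measure Unif (A j \<inter> {..<c}) * R"
        unfolding R_def eqE by (rule meas_PiE_upd[OF A(2) Bs jI])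
      also have "measure Unif (A j \<inter> {..<c}) = measure lborel ({0..1} \<inter> (A j \<inter> {..<c}))"
        using A(2) jI by (simp add: measure_Unif)
      also have "{0..1} \<inter> (A j \<inter> {..<c}) = {b..1} \<inter> {..<c}" using Aj01 by blast
      also have "{b..1} \<inter> {..<c} = {b..<c}" using c1 by auto
      finally have m1: "measure Pm (E \<phi> (Suc t) (y0 @ [S])) = (c - b) * R" using bc by simp
      have "pmf (tstep \<phi> \<pi> t y0) (y0 @ [S]) = measure (measure_pmf (bernoulli_pmf p)) {True}"
        unfolding ts pmf_map using ne True by (intro arg_cong[where f="measure _"]) (auto split: if_splits)
      also have "\<dots> = p" using p01 by (simp add: measure_pmf_single)
      finally have pm: "pmf (tstep \<phi> \<pi> t y0) (y0 @ [S]) = p" .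
      show ?thesis
      proof (cases "b = 1")
        case True
        then have "c = 1" using bc c1 by linarith
        then show ?thesis using True m1 mE pm by simp
      next
        case False
        then have "1 - b \<noteq> 0" by simp
        then have "p * (1 - b) = c - b" by (simp add: p)
        then show ?thesis unfolding m1 mE pm by (metis mult.assoc mult.commute)
      qed
    next
      case F2: False
      show ?thesis
      proof (cases "S = last y0")
        case True
        have "E \<phi> (Suc t) (y0 @ [S]) = {u \<in> PiE I A. u j \<in> {c..}}"
          unfolding Ey A(1) using ne True by (auto simp: hs not_less)
        also have "\<dots> = PiE I (A(j := A j \<inter> {c..}))" by (rule PiE_restrict_coord[OF jI])
        finally have eqE: "E \<phi> (Suc t) (y0 @ [S]) = PiE I (A(j := A j \<inter> {c..}))" .
        have Bs: "A j \<inter> {c..} \<in> sets borel" using A(2) jI by auto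
        have "measure Pm (E \<phi> (Suc t) (y0 @ [S])) = measure Unif (A j \<inter> {c..}) * R"
          unfolding R_def eqE by (rule meas_PiE_upd[OF A(2) Bs jI])
        also have "measure Unif (A j \<inter> {c..}) = measure lborel ({0..1} \<inter> (A j \<inter> {c..}))"
          using A(2) jI by (simp add: measure_Unif)
        also have "{0..1} \<inter> (A j \<inter> {c..}) = {b..1} \<inter> {c..}" using Aj01 by blast
        also have "{b..1} \<inter> {c..} = {c..1}" using bc by auto
        finally have m1: "measure Pm (E \<phi> (Suc t) (y0 @ [S])) = (1 - c) * R" using c1 by simp
        have "pmf (tstep \<phi> \<pi> t y0) (y0 @ [S]) = measure (measure_pmf (bernoulli_pmf p)) {False}"
          unfolding ts pmf_map using ne True by (intro arg_cong[where f="measure _"]) (auto split: if_splits)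
        also have "\<dots> = 1 - p" using p01 by (simp add: measure_pmf_single)
        finally have pm: "pmf (tstep \<phi> \<pi> t y0) (y0 @ [S]) = 1 - p" .
        show ?thesis
        proof (cases "b = 1")
          case True
          then have "c = 1" using bc c1 by linarith
          then show ?thesis using True m1 mE pm by simp
        next
          case False
          then have "1 - b \<noteq> 0" by simp
          then have "(1 - p) * (1 - b) = 1 - c" by (simp add: p field_simps)
          then show ?thesis unfolding m1 mE pm by (metis mult.assoc mult.commute)
        qed
      next
        case False
        have "E \<phi> (Suc t) (y0 @ [S]) = {}" unfolding Ey using False F2 by (auto simp: hs)
        moreover have "pmf (tstep \<phi> \<pi> t y0) (y0 @ [S]) = 0"
        proof -
          have "(\<lambda>b. y0 @ [if b then insert j (last y0) else last y0]) -` {y0 @ [S]} = {}"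
            using False F2 by (auto split: if_splits)
          then show ?thesis unfolding ts pmf_map by simp
        qed
        ultimately show ?thesis by simp
      qed
    qed
  qed
qed

lemma pmf_traj: "pmf (traj \<phi> \<pi> t) y = measure Pm (E \<phi> t y)"
proof (induction t arbitrary: y)
  case 0
  show ?case using prob_space.prob_space[OF prob_Pm]
    by (simp add: E_0 pmf_return indicator_def)
next
  case (Suc t)
  show ?case
  proof (cases y rule: rev_exhaust)
    case Nil
    have "pmf (traj \<phi> \<pi> (Suc t)) y = (\<integral>z. 0 \<partial>measure_pmf (traj \<phi> \<pi> t))"
      unfolding traj_Suc' pmf_bind using Nil
      by (intro Bochner_Integration.integral_cong refl pmf_tstep_0) auto
    then show ?thesis by (simp add: Nil E_Nil)
  next
    case (snoc y0 S)
    have "pmf (traj \<phi> \<pi> (Suc t)) y =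
        (\<integral>z. (if z = y0 then pmf (tstep \<phi> \<pi> t y0) (y0 @ [S]) else 0) \<partial>measure_pmf (traj \<phi> \<pi> t))"
      unfolding traj_Suc' pmf_bind snoc
      by (intro Bochner_Integration.integral_cong refl) (auto intro: pmf_tstep_0)
    also have "\<dots> = pmf (tstep \<phi> \<pi> t y0) (y0 @ [S]) * measure Pm (E \<phi> t y0)"
      by (simp add: integral_single Suc.IH)
    finally show ?thesis by (simp add: snoc step_meas)
  qed
qed

end

definition G :: "nat \<Rightarrow> nat set list set" where
  "G t = {y. set y \<subseteq> Pow I \<and> length y = Suc t}"

lemma finite_G: "finite (G t)"
  unfolding G_def by (rule finite_lists_length_eq) auto

lemma concat_map_if_single:
  "concat (map (\<lambda>m. if P m then [f m] else []) xs) = map f (filter P xs)"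
  by (induction xs) auto

lemma snoc_Pow: "set y \<subseteq> Pow J \<Longrightarrow> x \<subseteq> J \<Longrightarrow> set (y @ [x]) \<subseteq> Pow J"
  by auto

lemma last_in_Pow: "set y \<subseteq> Pow I \<Longrightarrow> y \<noteq> [] \<Longrightarrow> last y \<subseteq> I"
  using last_in_set by blast

lemma set_traj: "set_pmf (traj \<phi> \<pi> t) \<subseteq> G t"
proof (induction t)
  case 0
  then show ?case by (simp add: G_def)
next
  case (Suc t)
  have "set_pmf (tstep \<phi> \<pi> t y) \<subseteq> G (Suc t)" if "y \<in> G t" for y
  proof -
    have ne: "y \<noteq> []" and sy: "set y \<subseteq> Pow I" and ly: "length y = Suc t" using that by (auto simp: G_def)
    have "last y \<subseteq> I" using last_in_Pow[OF sy ne] .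
    moreover have "\<pi> t \<in> I" using pi_in by blast
    ultimately have lI: "last y \<subseteq> I" and iI: "insert (\<pi> t) (last y) \<subseteq> I" by blast+
    have "y @ [last y] \<in> G (Suc t)"
      unfolding G_def mem_Collect_eq length_append_singleton ly using snoc_Pow[OF sy lI] by blast
    moreover have "y @ [insert (\<pi> t) (last y)] \<in> G (Suc t)"
      unfolding G_def mem_Collect_eq length_append_singleton ly using snoc_Pow[OF sy iI] by blast
    moreover have "set_pmf (tstep \<phi> \<pi> t y) \<subseteq> {y @ [last y], y @ [insert (\<pi> t) (last y)]}"
      unfolding tstep_def by (auto split: if_splits)
    ultimately show ?thesis by blast
  qed
  then show ?case using Suc.IH unfolding traj_Suc' set_bind_pmf by blast
qed

lemma H_G: "H \<phi> \<pi> u t \<in> G t"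
proof (induction t)
  case 0
  then show ?case by (simp add: G_def)
next
  case (Suc t)
  have ne: "H \<phi> \<pi> u t \<noteq> []" using length_H[of \<phi> \<pi> u t] by (metis Zero_not_Suc list.size(3))
  have sH: "set (H \<phi> \<pi> u t) \<subseteq> Pow I" using Suc.IH unfolding G_def mem_Collect_eq by (rule conjunct1)
  have "last (H \<phi> \<pi> u t) \<subseteq> I" by (rule last_in_Pow[OF sH ne])
  moreover have "\<pi> t \<in> I" using pi_in by blast
  moreover have "Hstep \<phi> \<pi> t u hs \<subseteq> insert (\<pi> t) (last hs)" for hs
    unfolding Hstep_def by auto
  ultimately have "Hstep \<phi> \<pi> t u (H \<phi> \<pi> u t) \<subseteq> I" by blast
  then show ?case unfolding G_def mem_Collect_eq length_append_singleton H.simps length_H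
    using snoc_Pow[OF sH] by blast
qed

context
  fixes \<phi> :: config
  assumes cfg: "is_configuration d \<phi>" and mono: "monotone_config d \<phi>"
begin

lemma Hset_eq: "{u \<in> space Pm. H \<phi> \<pi> u t \<in> F} = (\<Union>y\<in>F \<inter> G t. E \<phi> t y)"
  using H_G unfolding E_def by blast

lemma Hset_sets: "{u \<in> space Pm. H \<phi> \<pi> u t \<in> F} \<in> sets Pm"
  unfolding Hset_eq using finite_G E_sets[OF cfg mono] by auto

lemma prob_traj: "measure_pmf.prob (traj \<phi> \<pi> t) F = measure Pm {u \<in> space Pm. H \<phi> \<pi> u t \<in> F}"
proof -
  interpret Q: prob_space Pm by (rule prob_Pm)
  have "measure_pmf.prob (traj \<phi> \<pi> t) F = measure_pmf.prob (traj \<phi> \<pi> t) (F \<inter> set_pmf (traj \<phi> \<pi> t))"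
    by (simp add: measure_Int_set_pmf)
  also have "F \<inter> set_pmf (traj \<phi> \<pi> t) = (F \<inter> G t) \<inter> set_pmf (traj \<phi> \<pi> t)"
    using set_traj[of \<phi> t] by blast
  also have "measure_pmf.prob (traj \<phi> \<pi> t) \<dots> = measure_pmf.prob (traj \<phi> \<pi> t) (F \<inter> G t)"
    by (simp add: measure_Int_set_pmf)
  also have "\<dots> = (\<Sum>y\<in>F \<inter> G t. pmf (traj \<phi> \<pi> t) y)"
    using finite_G by (simp add: measure_measure_pmf_finite)
  also have "\<dots> = (\<Sum>y\<in>F \<inter> G t. measure Pm (E \<phi> t y))"
    by (simp add: pmf_traj[OF cfg mono])
  also have "\<dots> = measure Pm (\<Union>y\<in>F \<inter> G t. E \<phi> t y)"
    by (rule measure_finite_Union[symmetric])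
      (use finite_G E_sets[OF cfg mono] in \<open>auto simp: disjoint_family_on_def E_def Q.emeasure_finite\<close>)
  also have "\<dots> = measure Pm {u \<in> space Pm. H \<phi> \<pi> u t \<in> F}" by (simp add: Hset_eq)
  finally show ?thesis .
qed

end

lemma last_list_all2: "list_all2 R xs ys \<Longrightarrow> xs \<noteq> [] \<Longrightarrow> R (last xs) (last ys)"
  by (induction rule: list_all2_induct) (auto simp: list_all2_Nil list_all2_Cons1 dest: list_all2_lengthD)

lemma knock_hist_mono:
  assumes "list_all2 (\<subseteq>) hB hA" "length hB = Suc t"
  shows "list_all2 (\<subseteq>) (knock_hist \<pi> t hB) (knock_hist \<pi> t hA)"
proof -
  define xs where "xs = filter (\<lambda>m. \<pi> m = \<pi> t) [0..<Suc t]"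
  have kB: "knock_hist \<pi> t hB = map (\<lambda>m. hB ! m \<inter> {1..<\<pi> t}) xs"
    unfolding knock_hist_def xs_def by (simp add: concat_map_if_single del: upt_Suc)
  have kA: "knock_hist \<pi> t hA = map (\<lambda>m. hA ! m \<inter> {1..<\<pi> t}) xs"
    unfolding knock_hist_def xs_def by (simp add: concat_map_if_single del: upt_Suc)
  have "hB ! m \<subseteq> hA ! m" if "m \<in> set xs" for m
  proof -
    have "m < length hB" using that assms(2) unfolding xs_def by auto
    then show ?thesis using assms(1) by (simp add: list_all2_conv_all_nth)
  qed
  then show ?thesis unfolding kA kB list_all2_map1 list_all2_map2
    by (intro list.rel_refl_strong) blast
qed

lemma H_mono:
  assumes pc: "pos_correlated d \<B>" and dom: "dominates d \<A> \<B>"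
  shows "list_all2 (\<subseteq>) (H \<B> \<pi> u t) (H \<A> \<pi> u t)"
proof (induction t)
  case 0
  then show ?case by simp
next
  case (Suc t)
  define hB where "hB = H \<B> \<pi> u t"
  define hA where "hA = H \<A> \<pi> u t"
  define j where "j = \<pi> t"
  have jI: "j \<in> I" using pi_in j_def by blast
  have IH: "list_all2 (\<subseteq>) hB hA" using Suc.IH by (simp add: hA_def hB_def)
  have lB: "length hB = Suc t" by (simp add: hB_def)
  have "hB \<noteq> []" using lB by (metis Zero_not_Suc list.size(3))
  then have ll: "last hB \<subseteq> last hA" by (rule last_list_all2[OF IH])
  have sA: "last hA \<subseteq> Hstep \<A> \<pi> t u hA" unfolding Hstep_def by auto
  have "Hstep \<B> \<pi> t u hB \<subseteq> Hstep \<A> \<pi> t u hA"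
  proof (cases "j \<in> last hB \<or> \<not> u j < \<B> j (knock_hist \<pi> t hB)")
    case True
    then have "Hstep \<B> \<pi> t u hB = last hB" unfolding Hstep_def j_def by auto
    then show ?thesis using ll sA by blast
  next
    case False
    then have hB: "Hstep \<B> \<pi> t u hB = insert j (last hB)" unfolding Hstep_def j_def by auto
    have "j \<in> Hstep \<A> \<pi> t u hA"
    proof (cases "j \<in> last hA")
      case True then show ?thesis using sA by blast
    next
      case nA: False
      have kh: "list_all2 (\<subseteq>) (knock_hist \<pi> t hB) (knock_hist \<pi> t hA)"
        by (rule knock_hist_mono[OF IH lB])
      have "\<B> j (knock_hist \<pi> t hB) \<le> \<B> j (knock_hist \<pi> t hA)"
        using pc jI kh valid_knock_hist[of t hA] valid_knock_hist[of t hB]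
        unfolding pos_correlated_def j_def by blast
      also have "\<dots> \<le> \<A> j (knock_hist \<pi> t hA)"
        using dom jI valid_knock_hist[of t hA] unfolding dominates_def j_def by blast
      finally have "u j < \<A> j (knock_hist \<pi> t hA)" using False by linarith
      then show ?thesis using nA unfolding Hstep_def j_def by auto
    qed
    then have "insert j (last hB) \<subseteq> Hstep \<A> \<pi> t u hA" using ll sA by blast
    then show ?thesis using hB by simp
  qed
  then show ?case using IH by (simp add: hA_def hB_def list_all2_appendI)
qed

end

theorem mainTheorem9:
  fixes d :: nat and \<A> \<B> :: config and \<pi> :: "nat \<Rightarrow> nat"
  assumes "d \<ge> 2"
    and "is_configuration d \<A>" and "monotone_config d \<A>" and "pos_correlated d \<A>"
    and "is_configuration d \<B>" and "monotone_config d \<B>" and "pos_correlated d \<B>"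
    and "dominates d \<A> \<B>"
    and "\<forall>t. \<pi> t \<in> {1..d}"
  shows "expected_time d \<A> \<pi> \<le> expected_time d \<B> \<pi>"
proof -
  interpret doors d \<pi> using assms(9) by unfold_locales blast
  interpret Q: prob_space Pm by (rule prob_Pm)
  define F where "F = {hs :: nat set list. \<not> {1..d} \<subseteq> last hs}"
  have le: "measure_pmf.prob (traj \<A> \<pi> t) F \<le> measure_pmf.prob (traj \<B> \<pi> t) F" for t
  proof -
    have sub: "{u \<in> space Pm. H \<A> \<pi> u t \<in> F} \<subseteq> {u \<in> space Pm. H \<B> \<pi> u t \<in> F}"
    proof safe
      fix u assume u: "u \<in> space Pm" "H \<A> \<pi> u t \<in> F"
      have la: "list_all2 (\<subseteq>) (H \<B> \<pi> u t) (H \<A> \<pi> u t)" by (rule H_mono[OF assms(7) assms(8)])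
      have "H \<B> \<pi> u t \<noteq> []" using length_H[of \<B> \<pi> u t] by (metis Zero_not_Suc list.size(3))
      then have "last (H \<B> \<pi> u t) \<subseteq> last (H \<A> \<pi> u t)" by (rule last_list_all2[OF la])
      then show "H \<B> \<pi> u t \<in> F" using u(2) unfolding F_def by blast
    qed
    show ?thesis unfolding prob_traj[OF assms(2,3)] prob_traj[OF assms(5,6)]
      by (rule Q.finite_measure_mono[OF sub Hset_sets[OF assms(5,6)]])
  qed
  have "(\<Sum>t. ennreal (measure_pmf.prob (traj \<A> \<pi> t) F)) \<le> (\<Sum>t. ennreal (measure_pmf.prob (traj \<B> \<pi> t) F))"
    by (rule suminf_le) (auto intro: summableI ennreal_leI le)
  then show ?thesis unfolding expected_time_def F_def .
qed

end
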